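(* Let $\beta\in(3/2,\beta^*]$, let $\vec z\in S_\beta$ and let $\vec z=\sum_{i=1}^\infty a_i\beta^{-i}$ with $a_i\in\{\vec q_0,\vec q_1,\vec q_2\}$ be any representation of $\vec z$ in base $\beta$. Then there exists $\omega\in\Omega$ such that $a_i=d_i(\omega,\vec z)$ for all $i\ge1$.
   Context: $\beta^*\approx1.5437$ is the real root of $x^3-2x^2+2x=2$. $\vec q_0=(0,0)$, $\vec q_1=(1,0)$, $\vec q_2=(0,1)$, $f_i(\vec z)=(\vec z+\vec q_i)/\beta$, $S_\beta$ the attractor of this IFS. $H=\{(x,y):x<\frac1\beta,\ y<\frac1\beta,\ x+y>\frac{1}{\beta(\beta-1)}\}$; $\tilde E_0=([0,\frac1\beta)\times[0,\frac1\beta))\setminus H$; $\tilde E_1=\{0\le y<\frac1\beta,\ \frac{1}{\beta(\beta-1)}<x+y\le\frac1{\beta-1}\}\setminus H$; $\tilde E_2=\{0\le x<\frac1\beta,\ \frac{1}{\beta(\beta-1)}<x+y\le\frac1{\beta-1}\}\setminus H$; $\tilde C_{01}=\{x\ge\frac1\beta,\ y\ge0,\ x+y\le\frac{1}{\beta(\beta-1)}\}$; $\tilde C_{12}=\{x\ge\frac1\beta,\ y\ge\frac1\beta,\ x+y\le\frac1{\beta-1}\}$; $\tilde C_{02}=\{x\ge0,\ y\ge\frac1\beta,\ x+y\le\frac{1}{\beta(\beta-1)}\}$. For $\{i,j,k\}=\{0,1,2\}$, $E_i=\bigl(\tilde E_i\cup\bigcup_{n\ge1}f_jf_i^n(H)\cup\bigcup_{n\ge1}f_kf_i^n(H)\bigr)\setminus\bigcup_{n\ge0}f_i^n(H)$;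 for $ij\in\{01,12,02\}$, $C_{ij}=\tilde C_{ij}\setminus\bigl(\bigcup_{n\ge1}f_if_j^n(H)\cup\bigcup_{n\ge1}f_jf_i^n(H)\bigr)$. $\Omega=\{0,1\}^{\mathbb N}$ with left shift $\sigma$. $K_\beta:\Omega\times S_\beta\to\Omega\times S_\beta$: $K_\beta(\omega,\vec z)=(\omega,\beta\vec z-\vec q_i)$ if $\vec z\in E_i$; $(\sigma\omega,\beta\vec z-\vec q_i)$ if $\omega_1=0$, $\vec z\in C_{ij}$; $(\sigma\omega,\beta\vec z-\vec q_j)$ if $\omega_1=1$, $\vec z\in C_{ij}$. The digit $d_1(\omega,\vec z)$ is the vector subtracted, $d_n=d_1\circ K_\beta^{n-1}$. *)

theory Defs
  imports "HOL-Analysis.Analysis"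
begin

type_synonym pt = "real \<times> real"

text \<open>beta star: the real root of x^3 - 2x^2 + 2x = 2 (unique, since the cubic is strictly increasing).\<close>
definition beta_star :: real where
  "beta_star = (THE x::real. x ^ 3 - 2 * x ^ 2 + 2 * x = 2)"

definition qv :: "nat \<Rightarrow> pt" where
  "qv i = (if i = 1 then (1, 0) else if i = 2 then (0, 1) else (0, 0))"

definition fmap :: "real \<Rightarrow> nat \<Rightarrow> pt \<Rightarrow> pt" where
  "fmap \<beta> i z = (1 / \<beta>) *\<^sub>R (z + qv i)"

definition Sbeta :: "real \<Rightarrow> pt set" where
  "Sbeta \<beta> = (THE S. compact S \<and> S \<noteq> {} \<and> S = (\<Union>i\<in>{0,1,2}. fmap \<beta> i ` S))"

definition Hset :: "real \<Rightarrow> pt set" where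
  "Hset \<beta> = {(x, y). x < 1 / \<beta> \<and> y < 1 / \<beta> \<and> x + y > 1 / (\<beta> * (\<beta> - 1))}"

definition Et :: "real \<Rightarrow> nat \<Rightarrow> pt set" where
  "Et \<beta> i =
    (if i = 0 then {(x, y). 0 \<le> x \<and> x < 1 / \<beta> \<and> 0 \<le> y \<and> y < 1 / \<beta>}
     else if i = 1 then {(x, y). 0 \<le> y \<and> y < 1 / \<beta> \<and> 1 / (\<beta> * (\<beta> - 1)) < x + y \<and> x + y \<le> 1 / (\<beta> - 1)}
     else {(x, y). 0 \<le> x \<and> x < 1 / \<beta> \<and> 1 / (\<beta> * (\<beta> - 1)) < x + y \<and> x + y \<le> 1 / (\<beta> - 1)})
    - Hset \<beta>"

definition Ct :: "real \<Rightarrow> nat \<Rightarrow> nat \<Rightarrow> pt set" where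
  "Ct \<beta> i j =
    (if (i, j) = (0, 1) then {(x, y). x \<ge> 1 / \<beta> \<and> y \<ge> 0 \<and> x + y \<le> 1 / (\<beta> * (\<beta> - 1))}
     else if (i, j) = (1, 2) then {(x, y). x \<ge> 1 / \<beta> \<and> y \<ge> 1 / \<beta> \<and> x + y \<le> 1 / (\<beta> - 1)}
     else {(x, y). x \<ge> 0 \<and> y \<ge> 1 / \<beta> \<and> x + y \<le> 1 / (\<beta> * (\<beta> - 1))})"

definition Eset :: "real \<Rightarrow> nat \<Rightarrow> pt set" where
  "Eset \<beta> i =
    (Et \<beta> i \<union> (\<Union>j\<in>{0,1,2} - {i}. \<Union>n\<in>{1..}. fmap \<beta> j ` ((fmap \<beta> i ^^ n) ` Hset \<beta>)))
    - (\<Union>n. (fmap \<beta> i ^^ n) ` Hset \<beta>)"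

definition Cset :: "real \<Rightarrow> nat \<Rightarrow> nat \<Rightarrow> pt set" where
  "Cset \<beta> i j =
    Ct \<beta> i j - (\<Union>n\<in>{1..}. fmap \<beta> i ` ((fmap \<beta> j ^^ n) ` Hset \<beta>)
                      \<union> fmap \<beta> j ` ((fmap \<beta> i ^^ n) ` Hset \<beta>))"

text \<open>Omega = {0,1}^N encoded as nat => bool (True = 1), omega_1 is omega 0; left shift.\<close>
definition shift :: "(nat \<Rightarrow> bool) \<Rightarrow> (nat \<Rightarrow> bool)" where
  "shift \<omega> = (\<lambda>n. \<omega> (Suc n))"

text \<open>One step of K_beta, returning the digit d_1 and the new state.
  Outside the union of the pieces (where K_beta is not defined in the paper) an arbitrary
  default is used.\<close>
definition Kstep :: "real \<Rightarrow> (nat \<Rightarrow> bool) \<times> pt \<Rightarrow> pt \<times> ((nat \<Rightarrow> bool) \<times> pt)" where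
  "Kstep \<beta> s = (case s of (\<omega>, z) \<Rightarrow>
     if z \<in> Eset \<beta> 0 then (qv 0, \<omega>, \<beta> *\<^sub>R z - qv 0)
     else if z \<in> Eset \<beta> 1 then (qv 1, \<omega>, \<beta> *\<^sub>R z - qv 1)
     else if z \<in> Eset \<beta> 2 then (qv 2, \<omega>, \<beta> *\<^sub>R z - qv 2)
     else if z \<in> Cset \<beta> 0 1 then
       (let d = qv (if \<omega> 0 then 1 else 0) in (d, shift \<omega>, \<beta> *\<^sub>R z - d))
     else if z \<in> Cset \<beta> 1 2 then
       (let d = qv (if \<omega> 0 then 2 else 1) in (d, shift \<omega>, \<beta> *\<^sub>R z - d))
     else if z \<in> Cset \<beta> 0 2 then
       (let d = qv (if \<omega> 0 then 2 else 0) in (d, shift \<omega>, \<beta> *\<^sub>R z - d))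
     else (qv 0, \<omega>, z))"

definition Kbeta :: "real \<Rightarrow> (nat \<Rightarrow> bool) \<times> pt \<Rightarrow> (nat \<Rightarrow> bool) \<times> pt" where
  "Kbeta \<beta> s = snd (Kstep \<beta> s)"

definition digit :: "real \<Rightarrow> nat \<Rightarrow> (nat \<Rightarrow> bool) \<Rightarrow> pt \<Rightarrow> pt" where
  "digit \<beta> n \<omega> z = fst (Kstep \<beta> ((Kbeta \<beta> ^^ (n - 1)) (\<omega>, z)))"

end

theory Submission
  imports Defs
begin

definition Rset :: "real \<Rightarrow> pt set" where
  "Rset \<beta> = {p. \<exists>a. (\<forall>i. a i \<le> (2::nat)) \<and> (\<lambda>i. (1 / \<beta>) ^ (Suc i) *\<^sub>R qv (a i)) sums p}"

lemma qv_simps[simp]: "qv 0 = (0,0)" "qv (Suc 0) = (1,0)" "qv 2 = (0,1)" "qv 1 = (1,0)"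
  by (auto simp: qv_def)

lemma fmap_simps:
  "fmap \<beta> 0 (x,y) = (x/\<beta>, y/\<beta>)"
  "fmap \<beta> (Suc 0) (x,y) = ((x+1)/\<beta>, y/\<beta>)"
  "fmap \<beta> 2 (x,y) = (x/\<beta>, (y+1)/\<beta>)"
  by (auto simp: fmap_def qv_def divide_inverse algebra_simps)

lemma fmap_simps1[simp]:
  "fmap \<beta> 0 p = (fst p/\<beta>, snd p/\<beta>)"
  "fmap \<beta> 1 p = ((fst p+1)/\<beta>, snd p/\<beta>)"
  "fmap \<beta> 2 p = (fst p/\<beta>, (snd p+1)/\<beta>)"
  "fmap \<beta> (Suc 0) p = ((fst p+1)/\<beta>, snd p/\<beta>)"
  by (auto simp: fmap_def qv_def prod_eq_iff divide_inverse algebra_simps)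

lemma fmap_inj:
  assumes "\<beta> \<noteq> 0" "fmap \<beta> d s = fmap \<beta> d t" shows "s = t"
  using assms by (auto simp: fmap_def)

lemma fmap_back: "\<beta> \<noteq> 0 \<Longrightarrow> \<beta> *\<^sub>R fmap \<beta> d s - qv d = s"
  by (auto simp: fmap_def)

lemma sums_step:
  assumes b: "\<beta> > 1" and s: "(\<lambda>i. (1 / \<beta>) ^ (Suc i) *\<^sub>R qv (a i)) sums p"
  shows "(\<lambda>i. (1 / \<beta>) ^ (Suc i) *\<^sub>R qv (a (Suc i))) sums (\<beta> *\<^sub>R p - qv (a 0))"
proof -
  have "(\<lambda>i. (1 / \<beta>) ^ (Suc (Suc i)) *\<^sub>R qv (a (Suc i))) sums (p - (1/\<beta>) *\<^sub>R qv (a 0))"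
    using s sums_Suc_iff[of "\<lambda>i. (1 / \<beta>) ^ (Suc i) *\<^sub>R qv (a i)" "p - (1/\<beta>) *\<^sub>R qv (a 0)"]
    by simp
  from sums_scaleR_right[OF this, of \<beta>]
  show ?thesis using b by (simp add: scaleR_right_diff_distrib)
qed

lemma Rset_step:
  assumes b: "\<beta> > 1" and p: "p \<in> Rset \<beta>"
  shows "\<exists>d s. d \<le> 2 \<and> s \<in> Rset \<beta> \<and> p = fmap \<beta> d s"
proof -
  obtain a where a: "\<forall>i. a i \<le> (2::nat)" "(\<lambda>i. (1 / \<beta>) ^ (Suc i) *\<^sub>R qv (a i)) sums p"
    using p by (auto simp: Rset_def)
  have "\<beta> *\<^sub>R p - qv (a 0) \<in> Rset \<beta>"
    unfolding Rset_def using a sums_step[OF b a(2)] by (auto intro!: exI[of _ "\<lambda>i. a (Suc i)"])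
  moreover have "p = fmap \<beta> (a 0) (\<beta> *\<^sub>R p - qv (a 0))"
    using b by (simp add: fmap_def)
  ultimately show ?thesis using a by blast
qed

lemma Rset_T:
  assumes b: "\<beta> > 1" and p: "p \<in> Rset \<beta>"
  shows "fst p \<ge> 0 \<and> snd p \<ge> 0 \<and> fst p + snd p \<le> 1 / (\<beta> - 1)"
proof -
  obtain a where a: "\<forall>i. a i \<le> (2::nat)" "(\<lambda>i. (1 / \<beta>) ^ (Suc i) *\<^sub>R qv (a i)) sums p"
    using p by (auto simp: Rset_def)
  have qa: "fst (qv (a i)) \<ge> 0 \<and> snd (qv (a i)) \<ge> 0 \<and> fst (qv (a i)) + snd (qv (a i)) \<le> 1" for i
    by (auto simp: qv_def)
  have f: "(\<lambda>i. (1 / \<beta>) ^ (Suc i) * fst (qv (a i))) sums fst p"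
    using bounded_linear.sums[OF bounded_linear_fst a(2)] by simp
  have g: "(\<lambda>i. (1 / \<beta>) ^ (Suc i) * snd (qv (a i))) sums snd p"
    using bounded_linear.sums[OF bounded_linear_snd a(2)] by simp
  have pos: "(1 / \<beta>) ^ (Suc i) \<ge> 0" for i using b by simp
  have "fst p \<ge> 0" by (rule sums_le[OF _ sums_zero f]) (rule mult_nonneg_nonneg[OF pos], use qa in blast)
  moreover have "snd p \<ge> 0" by (rule sums_le[OF _ sums_zero g]) (rule mult_nonneg_nonneg[OF pos], use qa in blast)
  moreover have geo: "(\<lambda>i. (1 / \<beta>) ^ (Suc i)) sums (1 / (\<beta> - 1))"
  proof -
    have "(\<lambda>i. (1/\<beta>) ^ i) sums (1 / (1 - 1/\<beta>))"
      by (rule geometric_sums) (use b in auto)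
    from sums_mult[OF this, of "1/\<beta>"] show ?thesis using b
      by (simp add: field_simps)
  qed
  have "fst p + snd p \<le> 1 / (\<beta> - 1)"
  proof (rule sums_le[OF _ sums_add[OF f g] geo])
    fix i
    have "(1 / \<beta>) ^ (Suc i) * fst (qv (a i)) + (1 / \<beta>) ^ (Suc i) * snd (qv (a i))
       = (1 / \<beta>) ^ (Suc i) * (fst (qv (a i)) + snd (qv (a i)))" by (simp add: algebra_simps)
    also have "\<dots> \<le> (1 / \<beta>) ^ (Suc i) * 1" by (rule mult_left_mono) (use qa pos in auto)
    finally show "(1 / \<beta>) ^ (Suc i) * fst (qv (a i)) + (1 / \<beta>) ^ (Suc i) * snd (qv (a i)) \<le> (1 / \<beta>) ^ (Suc i)" by simp
  qed
  ultimately show ?thesis by simp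
qed

definition cc :: "real \<Rightarrow> real" where "cc \<beta> = 1 / (\<beta> * (\<beta> - 1))"

definition inF :: "real \<Rightarrow> nat \<Rightarrow> pt \<Rightarrow> bool" where
  "inF \<beta> d p = (if d = 0 then fst p \<ge> 0 \<and> snd p \<ge> 0 \<and> fst p + snd p \<le> cc \<beta>
     else if d = 1 then fst p \<ge> 1/\<beta> \<and> snd p \<ge> 0 \<and> fst p + snd p \<le> 1/(\<beta>-1)
     else fst p \<ge> 0 \<and> snd p \<ge> 1/\<beta> \<and> fst p + snd p \<le> 1/(\<beta>-1))"

definition Inv :: "real \<Rightarrow> nat \<Rightarrow> pt \<Rightarrow> bool" where
  "Inv \<beta> i p = (if i = 0 then fst p < 1/\<beta> \<and> snd p < 1/\<beta>
     else if i = 1 then snd p < 1/\<beta> \<and> fst p + snd p > cc \<beta>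
     else fst p < 1/\<beta> \<and> fst p + snd p > cc \<beta>)"

lemma nat3: "(d::nat) \<le> 2 \<Longrightarrow> d = 0 \<or> d = 1 \<or> d = 2" by auto

lemma cc_facts:
  assumes "\<beta> > 1"
  shows "cc \<beta> > 0" "1/(\<beta>-1) = 1/\<beta> + cc \<beta>" "(cc \<beta> + 1)/\<beta> \<ge> cc \<beta>" "1/\<beta> < 1" "1/\<beta> > 0"
proof -
  show "cc \<beta> > 0" "1/(\<beta>-1) = 1/\<beta> + cc \<beta>" "1/\<beta> < 1" "1/\<beta> > 0"
    using assms by (auto simp: cc_def field_simps)
  have e: "(\<beta>-1) * cc \<beta> = 1/\<beta>" using assms by (simp add: cc_def field_simps)
  have "cc \<beta> + 1 - \<beta> * cc \<beta> = 1 - 1/\<beta>" using e by (simp add: algebra_simps)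
  moreover have "1/\<beta> < 1" using assms by (simp add: field_simps)
  ultimately have "cc \<beta> * \<beta> \<le> cc \<beta> + 1" by (simp add: algebra_simps)
  then show "(cc \<beta> + 1)/\<beta> \<ge> cc \<beta>" using assms by (simp add: pos_le_divide_eq)
qed

lemma div_lt: "(\<beta>::real) > 1 \<Longrightarrow> x < 1/\<beta> \<Longrightarrow> x / \<beta> < 1/\<beta>"
proof -
  assume b: "\<beta> > 1" and x: "x < 1/\<beta>"
  have "1/\<beta> < 1" using b by (simp add: field_simps)
  then have "x < 1" using x by linarith
  then show ?thesis using b by (simp add: divide_strict_right_mono)
qed

lemma sum_gt: "\<beta> > 1 \<Longrightarrow> x + y > cc \<beta> \<Longrightarrow> (x + y + 1) / \<beta> > cc \<beta>"
proof -
  assume b: "\<beta> > 1" and h: "x + y > cc \<beta>"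
  have "(cc \<beta> + 1)/\<beta> < (x+y+1)/\<beta>" using b h by (simp add: divide_strict_right_mono)
  thus ?thesis using cc_facts(3)[OF b] by linarith
qed

lemma inF_fmap:
  assumes b: "\<beta> > 1" and d: "d \<le> 2" and s: "fst s \<ge> 0 \<and> snd s \<ge> 0 \<and> fst s + snd s \<le> 1 / (\<beta> - 1)"
  shows "inF \<beta> d (fmap \<beta> d s)"
proof -
  have c: "(fst s + snd s)/\<beta> \<le> cc \<beta>"
    using b s divide_right_mono[of "fst s + snd s" "1/(\<beta>-1)" \<beta>] by (simp add: cc_def mult.commute)
  have c2: "(fst s + snd s + 1)/\<beta> \<le> 1/(\<beta>-1)"
    using b s divide_right_mono[of "fst s + snd s + 1" "1/(\<beta>-1) + 1" \<beta>] by (simp add: field_simps)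
  have c3: "(fst s + 1 + snd s)/\<beta> \<le> 1/(\<beta>-1)" "(fst s + (snd s + 1))/\<beta> \<le> 1/(\<beta>-1)"
    using c2 by (simp_all add: add_ac)
  show ?thesis using nat3[OF d] b s c c3
    by (auto simp: inF_def add_divide_distrib[symmetric] divide_right_mono)
qed

lemma Inv_H: "p \<in> Hset \<beta> \<Longrightarrow> Inv \<beta> i p"
  by (auto simp: Hset_def Inv_def cc_def)

lemma Inv_fmap: "\<beta> > 1 \<Longrightarrow> i \<le> 2 \<Longrightarrow> Inv \<beta> i p \<Longrightarrow> Inv \<beta> i (fmap \<beta> i p)"
  using nat3[of i] div_lt[of \<beta>] sum_gt[of \<beta> "fst p" "snd p"] sum_gt[of \<beta> "snd p" "fst p"]
  by (auto simp: Inv_def add_divide_distrib[symmetric] algebra_simps)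

lemma Inv_all: "\<beta> > 1 \<Longrightarrow> i \<le> 2 \<Longrightarrow> p \<in> (fmap \<beta> i ^^ n) ` Hset \<beta> \<Longrightarrow> Inv \<beta> i p"
proof (induction n arbitrary: p)
  case 0 then show ?case using Inv_H by auto
next
  case (Suc n)
  then obtain h0 where "h0 \<in> Hset \<beta>" "p = fmap \<beta> i ((fmap \<beta> i ^^ n) h0)" by auto
  then show ?case using Inv_fmap Suc by blast
qed

lemma G:
  assumes "\<beta> > 1" "i \<le> 2" "d \<le> 2" "k \<le> 2" "Inv \<beta> i h" "d \<noteq> i" "k \<noteq> d"
  shows "\<not> inF \<beta> d (fmap \<beta> k h)"
  using assms nat3[of i] nat3[of d] nat3[of k] div_lt[of \<beta> "fst h"] div_lt[of \<beta> "snd h"]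
     sum_gt[of \<beta> "fst h" "snd h"] sum_gt[of \<beta> "snd h" "fst h"]
  by (auto simp: Inv_def inF_def add_divide_distrib[symmetric] algebra_simps)

lemma inF_notH: "\<beta> > 1 \<Longrightarrow> inF \<beta> d p \<Longrightarrow> p \<notin> Hset \<beta>"
  by (auto simp: inF_def Hset_def cc_def split: if_splits)

lemma A: "\<beta> > 1 \<Longrightarrow> p \<in> Rset \<beta> \<Longrightarrow> i \<le> 2 \<Longrightarrow> p \<notin> (fmap \<beta> i ^^ n) ` Hset \<beta>"
proof (induction n arbitrary: p)
  case 0
  obtain d s where ds: "d \<le> 2" "s \<in> Rset \<beta>" "p = fmap \<beta> d s" using Rset_step 0 by blast
  show ?case using inF_notH[OF 0(1) inF_fmap[OF 0(1) ds(1) Rset_T[OF 0(1) ds(2)]]] ds by simp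
next
  case (Suc n)
  obtain d s where ds: "d \<le> 2" "s \<in> Rset \<beta>" "p = fmap \<beta> d s" using Rset_step Suc by blast
  show ?case
  proof
    assume "p \<in> (fmap \<beta> i ^^ Suc n) ` Hset \<beta>"
    then obtain h0 where "h0 \<in> Hset \<beta>" "p = fmap \<beta> i ((fmap \<beta> i ^^ n) h0)" by auto
    then obtain h where h: "h \<in> (fmap \<beta> i ^^ n) ` Hset \<beta>" "p = fmap \<beta> i h" by blast
    show False
    proof (cases "d = i")
      case True
      then have "s = h" using fmap_inj[of \<beta> i s h] h ds Suc by simp
      then show False using Suc.IH[OF Suc(2) ds(2) Suc(4)] h by simp
    next
      case False
      have "Inv \<beta> i h" using Inv_all h Suc by blast
      then have "\<not> inF \<beta> d p" using G[of \<beta> i d i h] h ds Suc False by auto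
      then show False using inF_fmap[OF Suc(2) ds(1) Rset_T[OF Suc(2) ds(2)]] ds by simp
    qed
  qed
qed


lemma Et_inF:
  assumes "\<beta> > 1" "inF \<beta> d p" "p \<in> Et \<beta> j" "j \<noteq> d" "d \<le> 2" "j \<le> 2"
  shows False
  using assms nat3[of d] nat3[of j]
  by (cases p) (auto simp: inF_def Et_def cc_def)

lemma Eset_mem:
  "w \<in> Eset \<beta> j \<longleftrightarrow>
    (w \<in> Et \<beta> j \<or> (\<exists>k\<in>{0,1,2} - {j}. \<exists>n\<ge>1. w \<in> fmap \<beta> k ` ((fmap \<beta> j ^^ n) ` Hset \<beta>)))
    \<and> (\<forall>n. w \<notin> (fmap \<beta> j ^^ n) ` Hset \<beta>)"
  unfolding Eset_def by blast

lemma L1: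
  assumes b: "\<beta> > 1" and s: "s \<in> Rset \<beta>" and w: "w \<in> Rset \<beta>" and ws: "w = fmap \<beta> d s"
    and d: "d \<le> 2" and j: "j \<le> 2" "j \<noteq> d"
  shows "w \<notin> Eset \<beta> j"
proof
  assume "w \<in> Eset \<beta> j"
  then have "w \<in> Et \<beta> j \<or> (\<exists>k\<in>{0,1,2} - {j}. \<exists>n\<ge>1. w \<in> fmap \<beta> k ` ((fmap \<beta> j ^^ n) ` Hset \<beta>))"
    unfolding Eset_mem by blast
  moreover have iF: "inF \<beta> d w" using inF_fmap[OF b d Rset_T[OF b s]] ws by simp
  ultimately consider "w \<in> Et \<beta> j" | k n h where "k \<in> {0,1,2}" "k \<noteq> j" "n \<ge> 1"
      "h \<in> (fmap \<beta> j ^^ n) ` Hset \<beta>" "w = fmap \<beta> k h" by blast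
  then show False
  proof cases
    case 1 then show False using Et_inF[OF b iF _ j(2) d j(1)] by blast
  next
    case (2 k n h)
    show False
    proof (cases "k = d")
      case True
      then have "s = h" using fmap_inj[of \<beta> d s h] 2 ws b by simp
      then show False using A[OF b s j(1), of n] 2 by simp
    next
      case False
      have "Inv \<beta> j h" using Inv_all[OF b j(1)] 2 by blast
      then show False using G[OF b j(1) d _ _ j(2)[symmetric] False] 2 iF by auto
    qed
  qed
qed

lemma R_split:
  assumes b: "\<beta> > 1" and iF: "inF \<beta> d w" and d: "d \<le> 2"
  shows "w \<in> Et \<beta> d \<or> (d \<in> {0,1} \<and> w \<in> Ct \<beta> 0 1) \<or> (d \<in> {1,2} \<and> w \<in> Ct \<beta> 1 2)
      \<or> (d \<in> {0,2} \<and> w \<in> Ct \<beta> 0 2)"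
proof -
  have nH: "w \<notin> Hset \<beta>" using inF_notH[OF b iF] .
  obtain x y where xy: "w = (x, y)" by (cases w)
  have nH': "\<not> (x < 1 / \<beta> \<and> y < 1 / \<beta> \<and> x + y > 1 / (\<beta> * (\<beta> - 1)))"
    using nH xy by (simp add: Hset_def)
  consider "d = 0" | "d = 1" | "d = 2" using nat3[OF d] by blast
  then show ?thesis
  proof cases
    case 1
    then have h: "x \<ge> 0" "y \<ge> 0" "x + y \<le> 1 / (\<beta> * (\<beta> - 1))" using iF xy by (simp_all add: inF_def cc_def)
    consider "x < 1/\<beta> \<and> y < 1/\<beta>" | "x \<ge> 1/\<beta>" | "y \<ge> 1/\<beta>" by linarith
    then show ?thesis
    proof cases
      case 1 then have "w \<in> Et \<beta> 0" using h nH xy by (simp add: Et_def)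
      then show ?thesis using \<open>d = 0\<close> by simp
    next
      case 2 then have "w \<in> Ct \<beta> 0 1" using h xy by (simp add: Ct_def)
      then show ?thesis using \<open>d = 0\<close> by simp
    next
      case 3 then have "w \<in> Ct \<beta> 0 2" using h xy by (simp add: Ct_def)
      then show ?thesis using \<open>d = 0\<close> by simp
    qed
  next
    case 2
    then have h: "x \<ge> 1/\<beta>" "y \<ge> 0" "x + y \<le> 1 / (\<beta> - 1)" using iF xy by (simp_all add: inF_def)
    consider "y < 1/\<beta> \<and> x + y > 1 / (\<beta> * (\<beta> - 1))" | "x + y \<le> 1 / (\<beta> * (\<beta> - 1))" | "y \<ge> 1/\<beta>" by linarith
    then show ?thesis
    proof cases
      case 1 then have "w \<in> Et \<beta> 1" using h nH xy by (simp add: Et_def)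
      then show ?thesis using \<open>d = 1\<close> by simp
    next
      case 2 then have "w \<in> Ct \<beta> 0 1" using h xy by (simp add: Ct_def)
      then show ?thesis using \<open>d = 1\<close> by simp
    next
      case 3 then have "w \<in> Ct \<beta> 1 2" using h xy by (simp add: Ct_def)
      then show ?thesis using \<open>d = 1\<close> by simp
    qed
  next
    case 3
    then have h: "x \<ge> 0" "y \<ge> 1/\<beta>" "x + y \<le> 1 / (\<beta> - 1)" using iF xy by (simp_all add: inF_def)
    consider "x < 1/\<beta> \<and> x + y > 1 / (\<beta> * (\<beta> - 1))" | "x + y \<le> 1 / (\<beta> * (\<beta> - 1))" | "x \<ge> 1/\<beta>" by linarith
    then show ?thesis
    proof cases
      case 1 then have "w \<in> Et \<beta> 2" using h nH xy by (simp add: Et_def)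
      then show ?thesis using \<open>d = 2\<close> by simp
    next
      case 2 then have "w \<in> Ct \<beta> 0 2" using h xy by (simp add: Ct_def)
      then show ?thesis using \<open>d = 2\<close> by simp
    next
      case 3 then have "w \<in> Ct \<beta> 1 2" using h xy by (simp add: Ct_def)
      then show ?thesis using \<open>d = 2\<close> by simp
    qed
  qed
qed

lemma CtoE':
  assumes b: "\<beta> > 1" and s: "s \<in> Rset \<beta>" and w: "w \<in> Rset \<beta>" and ws: "w = fmap \<beta> d s"
    and d: "d \<le> 2" and mm: "m \<le> 2" "m' \<le> 2" "m \<noteq> m'" "d = m \<or> d = m'" "n \<ge> 1"
    "h \<in> (fmap \<beta> m' ^^ n) ` Hset \<beta>" "w = fmap \<beta> m h"
  shows "w \<in> Eset \<beta> d"
proof -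
  have nA: "\<forall>n. w \<notin> (fmap \<beta> d ^^ n) ` Hset \<beta>" using A[OF b w d] by blast
  show ?thesis
  proof (cases "m = d")
    case True
    then have "s = h" using fmap_inj[of \<beta> d s h] mm ws b by simp
    then have False using A[OF b s mm(2), of n] mm by blast
    then show ?thesis ..
  next
    case False
    then have "m' = d" "m \<in> {0,1,2} - {d}" using mm by auto
    then show ?thesis unfolding Eset_mem using nA mm by blast
  qed
qed

lemma CtoE:
  assumes b: "\<beta> > 1" and s: "s \<in> Rset \<beta>" and w: "w \<in> Rset \<beta>" and ws: "w = fmap \<beta> d s"
    and d: "d \<le> 2" and ij: "i \<le> 2" "j \<le> 2" "i \<noteq> j" "d = i \<or> d = j"
    and C: "w \<in> Ct \<beta> i j" "w \<notin> Cset \<beta> i j"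
  shows "w \<in> Eset \<beta> d"
proof -
  obtain n where n: "n \<ge> 1" "w \<in> fmap \<beta> i ` ((fmap \<beta> j ^^ n) ` Hset \<beta>)
      \<or> w \<in> fmap \<beta> j ` ((fmap \<beta> i ^^ n) ` Hset \<beta>)"
    using C unfolding Cset_def by blast
  then show ?thesis
  proof (elim disjE)
    assume "w \<in> fmap \<beta> i ` ((fmap \<beta> j ^^ n) ` Hset \<beta>)"
    then obtain h where "h \<in> (fmap \<beta> j ^^ n) ` Hset \<beta>" "w = fmap \<beta> i h" by blast
    then show ?thesis using CtoE'[OF b s w ws d ij(1,2,3) ij(4) n(1)] by blast
  next
    assume "w \<in> fmap \<beta> j ` ((fmap \<beta> i ^^ n) ` Hset \<beta>)"
    then obtain h where "h \<in> (fmap \<beta> i ^^ n) ` Hset \<beta>" "w = fmap \<beta> j h" by blast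
    moreover have "d = j \<or> d = i" using ij by blast
    ultimately show ?thesis using CtoE'[OF b s w ws d ij(2,1) ij(3)[symmetric] _ n(1)] by blast
  qed
qed

lemma L2:
  assumes b: "\<beta> > 1" and s: "s \<in> Rset \<beta>" and w: "w \<in> Rset \<beta>" and ws: "w = fmap \<beta> d s"
    and d: "d \<le> 2"
  shows "w \<in> Eset \<beta> d \<or> (d \<in> {0,1} \<and> w \<in> Cset \<beta> 0 1) \<or> (d \<in> {1,2} \<and> w \<in> Cset \<beta> 1 2)
      \<or> (d \<in> {0,2} \<and> w \<in> Cset \<beta> 0 2)"
proof -
  have iF: "inF \<beta> d w" using inF_fmap[OF b d Rset_T[OF b s]] ws by simp
  have nA: "\<forall>n. w \<notin> (fmap \<beta> d ^^ n) ` Hset \<beta>" using A[OF b w d] by blast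
  have E1: "w \<in> Et \<beta> d \<Longrightarrow> w \<in> Eset \<beta> d" unfolding Eset_mem using nA by blast
  have c1: "d \<in> {0,1} \<Longrightarrow> w \<in> Ct \<beta> 0 1 \<Longrightarrow> w \<notin> Cset \<beta> 0 1 \<Longrightarrow> w \<in> Eset \<beta> d"
    using CtoE[OF b s w ws d, of 0 1] by auto
  have c2: "d \<in> {1,2} \<Longrightarrow> w \<in> Ct \<beta> 1 2 \<Longrightarrow> w \<notin> Cset \<beta> 1 2 \<Longrightarrow> w \<in> Eset \<beta> d"
    using CtoE[OF b s w ws d, of 1 2] by auto
  have c3: "d \<in> {0,2} \<Longrightarrow> w \<in> Ct \<beta> 0 2 \<Longrightarrow> w \<notin> Cset \<beta> 0 2 \<Longrightarrow> w \<in> Eset \<beta> d"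
    using CtoE[OF b s w ws d, of 0 2] by auto
  show ?thesis using R_split[OF b iF d] E1 c1 c2 c3 by blast
qed

lemma Ct_simps:
  "Ct \<beta> 0 1 = {(x, y). x \<ge> 1 / \<beta> \<and> y \<ge> 0 \<and> x + y \<le> 1 / (\<beta> * (\<beta> - 1))}"
  "Ct \<beta> 1 2 = {(x, y). x \<ge> 1 / \<beta> \<and> y \<ge> 1 / \<beta> \<and> x + y \<le> 1 / (\<beta> - 1)}"
  "Ct \<beta> 0 2 = {(x, y). x \<ge> 0 \<and> y \<ge> 1 / \<beta> \<and> x + y \<le> 1 / (\<beta> * (\<beta> - 1))}"
  by (simp_all add: Ct_def)

lemma Ct_disj:
  assumes "\<beta> > 3/2"
  shows "Ct \<beta> 0 1 \<inter> Ct \<beta> 1 2 = {}" "Ct \<beta> 0 1 \<inter> Ct \<beta> 0 2 = {}" "Ct \<beta> 1 2 \<inter> Ct \<beta> 0 2 = {}"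
proof -
  have k: "1 / (\<beta> * (\<beta> - 1)) < 1 / \<beta> + 1 / \<beta>" using assms by (simp add: field_simps)
  have n: "\<not> (x \<ge> 1/\<beta> \<and> y \<ge> 1/\<beta> \<and> x + y \<le> 1 / (\<beta> * (\<beta> - 1)))" for x y using k by linarith
  show "Ct \<beta> 0 1 \<inter> Ct \<beta> 1 2 = {}" "Ct \<beta> 0 1 \<inter> Ct \<beta> 0 2 = {}" "Ct \<beta> 1 2 \<inter> Ct \<beta> 0 2 = {}"
    unfolding Ct_simps using n by blast+
qed

lemma Cset_sub: "Cset \<beta> i j \<subseteq> Ct \<beta> i j" unfolding Cset_def by blast

lemma Kstep_E:
  assumes b: "\<beta> > 3/2" and s: "s \<in> Rset \<beta>" and w: "w \<in> Rset \<beta>" and ws: "w = fmap \<beta> d s"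
    and d: "d \<le> 2" and E: "w \<in> Eset \<beta> 0 \<union> Eset \<beta> 1 \<union> Eset \<beta> 2"
  shows "Kstep \<beta> (\<omega>, w) = (qv d, \<omega>, s)"
proof -
  have b1: "\<beta> > 1" using b by simp
  have ne: "j \<le> 2 \<Longrightarrow> j \<noteq> d \<Longrightarrow> w \<notin> Eset \<beta> j" for j using L1[OF b1 s w ws d] by blast
  have bk: "\<beta> *\<^sub>R w - qv d = s" using fmap_back[of \<beta> d s] b1 ws by simp
  consider "d = 0" | "d = 1" | "d = 2" using nat3[OF d] by blast
  then show ?thesis
  proof cases
    case 1
    with E ne[of 1] ne[of 2] have "w \<in> Eset \<beta> 0" by auto
    then show ?thesis using bk 1 unfolding Kstep_def by simp
  next
    case 2
    with E ne[of 0] ne[of 2] have "w \<in> Eset \<beta> 1" "w \<notin> Eset \<beta> 0" by auto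
    then show ?thesis using bk 2 unfolding Kstep_def by simp
  next
    case 3
    with E ne[of 0] ne[of 1] have "w \<in> Eset \<beta> 2" "w \<notin> Eset \<beta> 0" "w \<notin> Eset \<beta> 1" by auto
    then show ?thesis using bk 3 unfolding Kstep_def by simp
  qed
qed

lemma Kstep_C:
  assumes b: "\<beta> > 3/2" and s: "s \<in> Rset \<beta>" and w: "w \<in> Rset \<beta>" and ws: "w = fmap \<beta> d s"
    and d: "d \<le> 2" and E: "w \<notin> Eset \<beta> 0 \<union> Eset \<beta> 1 \<union> Eset \<beta> 2"
    and om: "\<omega> 0 = (if w \<in> Cset \<beta> 0 1 then d = 1 else d = 2)"
  shows "Kstep \<beta> (\<omega>, w) = (qv d, shift \<omega>, s)"
proof -
  have b1: "\<beta> > 1" using b by simp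
  have bk: "\<beta> *\<^sub>R w - qv d = s" using fmap_back[of \<beta> d s] b1 ws by simp
  have dj: "w \<in> Cset \<beta> 0 1 \<Longrightarrow> w \<notin> Cset \<beta> 1 2" "w \<in> Cset \<beta> 0 1 \<Longrightarrow> w \<notin> Cset \<beta> 0 2"
    "w \<in> Cset \<beta> 1 2 \<Longrightarrow> w \<notin> Cset \<beta> 0 2"
    using Ct_disj[OF b] Cset_sub[of \<beta> 0 1] Cset_sub[of \<beta> 1 2] Cset_sub[of \<beta> 0 2] by blast+
  have E': "w \<notin> Eset \<beta> 0" "w \<notin> Eset \<beta> 1" "w \<notin> Eset \<beta> 2" using E by auto
  have L: "(d \<in> {0,1} \<and> w \<in> Cset \<beta> 0 1) \<or> (d \<in> {1,2} \<and> w \<in> Cset \<beta> 1 2)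
      \<or> (d \<in> {0,2} \<and> w \<in> Cset \<beta> 0 2)"
  proof -
    have "w \<notin> Eset \<beta> d" using E nat3[OF d] by auto
    then show ?thesis using L2[OF b1 s w ws d] by blast
  qed
  then consider "d = 0" "w \<in> Cset \<beta> 0 1" | "d = 1" "w \<in> Cset \<beta> 0 1" | "d = 1" "w \<in> Cset \<beta> 1 2"
    | "d = 2" "w \<in> Cset \<beta> 1 2" | "d = 0" "w \<in> Cset \<beta> 0 2" | "d = 2" "w \<in> Cset \<beta> 0 2" by blast
  then show ?thesis
  proof cases
    case 1 then show ?thesis using om bk E' unfolding Kstep_def by (simp add: Let_def)
  next
    case 2 then show ?thesis using om bk E' unfolding Kstep_def by (simp add: Let_def)
  next
    case 3
    then have "w \<notin> Cset \<beta> 0 1" using dj by blast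
    then show ?thesis using om bk E' 3 unfolding Kstep_def by (simp add: Let_def)
  next
    case 4
    then have "w \<notin> Cset \<beta> 0 1" using dj by blast
    then show ?thesis using om bk E' 4 unfolding Kstep_def by (simp add: Let_def)
  next
    case 5
    then have "w \<notin> Cset \<beta> 0 1" "w \<notin> Cset \<beta> 1 2" using dj by blast+
    then show ?thesis using om bk E' 5 unfolding Kstep_def by (simp add: Let_def)
  next
    case 6
    then have "w \<notin> Cset \<beta> 0 1" "w \<notin> Cset \<beta> 1 2" using dj by blast+
    then show ?thesis using om bk E' 6 unfolding Kstep_def by (simp add: Let_def)
  qed
qed

lemma shift_pow: "(shift ^^ k) \<omega> = (\<lambda>i. \<omega> (k + i))"
  by (induction k) (auto simp: shift_def)

theorem theorem6p6:
  fixes \<beta> :: real and z :: pt and a :: "nat \<Rightarrow> pt"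
  assumes "3 / 2 < \<beta>" and "\<beta> \<le> beta_star"
    and "z \<in> Sbeta \<beta>"
    and "\<forall>i\<ge>1. a i \<in> {qv 0, qv 1, qv 2}"
    and "(\<lambda>i. (1 / \<beta>) ^ (Suc i) *\<^sub>R a (Suc i)) sums z"
  shows "\<exists>\<omega> :: nat \<Rightarrow> bool. \<forall>i\<ge>1. a i = digit \<beta> i \<omega> z"
proof -
  have b: "\<beta> > 3/2" using assms(1) .
  have b1: "\<beta> > 1" using b by simp
  have "\<forall>n. \<exists>d. d \<le> (2::nat) \<and> a (Suc n) = qv d"
  proof
    fix n
    have "a (Suc n) \<in> {qv 0, qv 1, qv 2}" using assms(4) by simp
    then consider "a (Suc n) = qv 0" | "a (Suc n) = qv 1" | "a (Suc n) = qv 2" by blast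
    then show "\<exists>d. d \<le> (2::nat) \<and> a (Suc n) = qv d"
    proof cases
      case 1 then show ?thesis by (intro exI[of _ 0]) (simp only: le0 simp_thms)
    next
      case 2 then show ?thesis by (intro exI[of _ 1]) (simp only: one_le_numeral simp_thms)
    next
      case 3 then show ?thesis by (intro exI[of _ 2]) (simp only: order_refl simp_thms)
    qed
  qed
  from choice[OF this] obtain dg where dgA: "\<forall>n. dg n \<le> (2::nat) \<and> a (Suc n) = qv (dg n)" by blast
  then have dg: "\<And>n. dg n \<le> (2::nat)" "\<And>n. a (Suc n) = qv (dg n)" by blast+
  define zs where "zs = rec_nat z (\<lambda>n p. \<beta> *\<^sub>R p - qv (dg n))"
  have zs0: "zs 0 = z" and zsS: "\<And>n. zs (Suc n) = \<beta> *\<^sub>R zs n - qv (dg n)"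
    by (simp_all add: zs_def)
  have sm: "(\<lambda>i. (1 / \<beta>) ^ (Suc i) *\<^sub>R qv (dg (n + i))) sums zs n" for n
  proof (induction n)
    case 0
    have "(\<lambda>i. (1 / \<beta>) ^ (Suc i) *\<^sub>R qv (dg i)) sums z" using assms(5) unfolding dg(2)[symmetric] .
    then show ?case using zs0 by simp
  next
    case (Suc n)
    from sums_step[where a="\<lambda>i. dg (n + i)", OF b1 Suc] show ?case using zsS[of n] by simp
  qed
  have R: "zs n \<in> Rset \<beta>" for n
    unfolding Rset_def
    by (rule CollectI, rule exI[of _ "\<lambda>i. dg (n+i)"], rule conjI) (use sm[of n] dg(1) in auto)
  have fm: "zs n = fmap \<beta> (dg n) (zs (Suc n))" for n
    using b1 zsS[of n] by (simp add: fmap_def)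
  define isC where "isC n = (zs n \<notin> Eset \<beta> 0 \<union> Eset \<beta> 1 \<union> Eset \<beta> 2)" for n
  define need where "need n = (if zs n \<in> Cset \<beta> 0 1 then dg n = 1 else dg n = 2)" for n
  define cnt where "cnt n = card {k. k < n \<and> isC k}" for n
  define \<omega> where "\<omega> m = (\<exists>n. isC n \<and> cnt n = m \<and> need n)" for m
  have cnt_mono: "cnt n < cnt n'" if "isC n" "n < n'" for n n'
  proof -
    have "{k. k < n \<and> isC k} \<subset> {k. k < n' \<and> isC k}" using that by auto
    then show ?thesis unfolding cnt_def by (rule psubset_card_mono[rotated]) simp
  qed
  have om: "\<omega> (cnt n) = need n" if "isC n" for n
  proof
    assume "\<omega> (cnt n)"
    then obtain n' where n': "isC n'" "cnt n' = cnt n" "need n'" unfolding \<omega>_def by blast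
    have "n' = n"
    proof (rule ccontr)
      assume "n' \<noteq> n"
      then consider "n < n'" | "n' < n" by linarith
      then show False
      proof cases
        case 1 then show False using cnt_mono[OF that 1] n'(2) by simp
      next
        case 2 then show False using cnt_mono[OF n'(1) 2] n'(2) by simp
      qed
    qed
    then show "need n" using n' by simp
  next
    assume "need n"
    then show "\<omega> (cnt n)" unfolding \<omega>_def using that by blast
  qed
  have cntS: "cnt (Suc n) = (if isC n then Suc (cnt n) else cnt n)" for n
  proof -
    have "{k. k < Suc n \<and> isC k} = (if isC n then insert n {k. k < n \<and> isC k} else {k. k < n \<and> isC k})"
      by (auto simp: less_Suc_eq)
    then show ?thesis unfolding cnt_def by simp
  qed
  have st: "(Kbeta \<beta> ^^ n) (\<omega>, z) = ((shift ^^ cnt n) \<omega>, zs n)" for n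
  proof (induction n)
    case 0 then show ?case using zs0 by (simp add: cnt_def)
  next
    case (Suc n)
    have "(Kbeta \<beta> ^^ Suc n) (\<omega>, z) = snd (Kstep \<beta> ((shift ^^ cnt n) \<omega>, zs n))"
      by (simp only: funpow.simps comp_apply Suc.IH Kbeta_def)
    also have "\<dots> = ((shift ^^ cnt (Suc n)) \<omega>, zs (Suc n))"
    proof (cases "isC n")
      case True
      have o0: "((shift ^^ cnt n) \<omega>) 0 = need n" using om[OF True] by (simp add: shift_pow)
      have E: "zs n \<notin> Eset \<beta> 0 \<union> Eset \<beta> 1 \<union> Eset \<beta> 2" using True unfolding isC_def .
      have o1: "((shift ^^ cnt n) \<omega>) 0 = (if zs n \<in> Cset \<beta> 0 1 then dg n = 1 else dg n = 2)"
        using o0 unfolding need_def .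
      have "Kstep \<beta> ((shift ^^ cnt n) \<omega>, zs n) = (qv (dg n), shift ((shift ^^ cnt n) \<omega>), zs (Suc n))"
        by (rule Kstep_C[where \<omega>="(shift ^^ cnt n) \<omega>", OF b R[of "Suc n"] R[of n] fm[of n] dg(1)[of n] E o1])
      then show ?thesis using True cntS[of n] by simp
    next
      case False
      have E: "zs n \<in> Eset \<beta> 0 \<union> Eset \<beta> 1 \<union> Eset \<beta> 2" using False unfolding isC_def by blast
      have "Kstep \<beta> ((shift ^^ cnt n) \<omega>, zs n) = (qv (dg n), (shift ^^ cnt n) \<omega>, zs (Suc n))"
        by (rule Kstep_E[where \<omega>="(shift ^^ cnt n) \<omega>", OF b R[of "Suc n"] R[of n] fm[of n] dg(1)[of n] E])
      then show ?thesis using False cntS[of n] by simp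
    qed
    finally show ?case .
  qed
  have "a i = digit \<beta> i \<omega> z" if "i \<ge> 1" for i
  proof -
    define n where "n = i - 1"
    have n: "i = Suc n" using that unfolding n_def by simp
    have "digit \<beta> i \<omega> z = fst (Kstep \<beta> ((Kbeta \<beta> ^^ n) (\<omega>, z)))"
      unfolding digit_def n by simp
    also have "\<dots> = fst (Kstep \<beta> ((shift ^^ cnt n) \<omega>, zs n))"
      by (simp only: st)
    also have "\<dots> = qv (dg n)"
    proof (cases "isC n")
      case True
      have o0: "((shift ^^ cnt n) \<omega>) 0 = need n" using om[OF True] by (simp add: shift_pow)
      have E: "zs n \<notin> Eset \<beta> 0 \<union> Eset \<beta> 1 \<union> Eset \<beta> 2" using True unfolding isC_def .
      have o1: "((shift ^^ cnt n) \<omega>) 0 = (if zs n \<in> Cset \<beta> 0 1 then dg n = 1 else dg n = 2)"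
        using o0 unfolding need_def .
      show ?thesis
        using Kstep_C[where \<omega>="(shift ^^ cnt n) \<omega>", OF b R[of "Suc n"] R[of n] fm[of n] dg(1)[of n] E o1] by simp
    next
      case False
      have E: "zs n \<in> Eset \<beta> 0 \<union> Eset \<beta> 1 \<union> Eset \<beta> 2" using False unfolding isC_def by blast
      show ?thesis
        using Kstep_E[where \<omega>="(shift ^^ cnt n) \<omega>", OF b R[of "Suc n"] R[of n] fm[of n] dg(1)[of n] E] by simp
    qed
    finally show ?thesis using dg(2)[of n] n by simp
  qed
  then show ?thesis by blast
qed

end
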